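(* Let $m\ge2$, $\alpha,\beta\in\mathbb C$, and let $A_{\alpha,\beta}$ be the $m\times m$ tridiagonal matrix with ones on the sub- and superdiagonal, $(1,1)$ entry $\alpha$, $(m,m)$ entry $\beta$, and zeros elsewhere. For $1\le i\le m-1$ let $$P_i^{(\alpha,\beta)}=T_m(z^i+z^{-i})+H_i^{(\alpha)}+J_mH_i^{(\beta)}J_m,$$ and $P_0^{(\alpha,\beta)}=I_m$. Then for every $n=1,\ldots,m-1$, $$A_{\alpha,\beta}^n=\sum_{i=0}^{\lfloor (n-1)/2\rfloor}\binom{n}{i}P_{n-2i}^{(\alpha,\beta)}+\varphi_nI_m,$$ where $\varphi_n=0$ if $n$ is odd and $\varphi_n=\binom{n}{n/2}$ if $n$ is even.
   Context: $I_m$ is the $m\times m$ identity and $J_m$ the $m\times m$ permutation matrix with ones on the anti-diagonal. $T_m(z^i+z^{-i})$ is the $m\times m$ symmetric Toeplitz matrix with ones on the $i$-th super- and subdiagonal and zeros elsewhere. For $\gamma\in\mathbb C$, let $\theta_\gamma=\gamma^2-1$, $h_1^{\gamma}(z)=\gamma z$ and $h_n^{\gamma}(z)=\theta_\gamma\sum_{j=1}^{n-1}\gamma^{n-j-1}z^j+\gamma z^n$ for $n\ge2$; $H_i^{(\gamma)}$ is the $m\times m$ Hankel matrix whose $(k,l)$ entry is the coefficient of $z^{k+l-1}$ in $h_i^{\gamma}(z)$ (i.e. the leading $m\times m$ principal submatrix of the semi-infinite Hankel matrix with first column the coefficient vector of $h_i^\gamma$). *)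

theory Defs
  imports Complex_Main "Jordan_Normal_Form.Matrix"
begin

(* All matrices are m x m Jordan_Normal_Form matrices, indexed 0..m-1
   (paper's index k corresponds to k-1 here). *)

definition theta :: "complex \<Rightarrow> complex" where
  "theta \<gamma> = \<gamma>^2 - 1"

(* coefficient of z^k in h_n^\<gamma>(z) (n \<ge> 1);
   h_1 = \<gamma> z, h_n = \<theta> \<Sum>_{j=1}^{n-1} \<gamma>^(n-j-1) z^j + \<gamma> z^n *)
definition hcoeff :: "complex \<Rightarrow> nat \<Rightarrow> nat \<Rightarrow> complex" where
  "hcoeff \<gamma> n k =
     (if n = 1 then (if k = 1 then \<gamma> else 0)
      else if k = n then \<gamma>
      else if 1 \<le> k \<and> k < n then theta \<gamma> * \<gamma>^(n - k - 1)
      else 0)"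

(* H_i^(\<gamma>): (k,l) entry (1-based) = coefficient of z^(k+l-1);
   with 0-based indices this is z^(k+l+1) *)
definition hankelH :: "nat \<Rightarrow> complex \<Rightarrow> nat \<Rightarrow> complex mat" where
  "hankelH m \<gamma> i = mat m m (\<lambda>(k,l). hcoeff \<gamma> i (k + l + 1))"

definition toepT :: "nat \<Rightarrow> nat \<Rightarrow> complex mat" where
  "toepT m i = mat m m (\<lambda>(k,l). if k = l + i \<or> l = k + i then 1 else 0)"

definition exchJ :: "nat \<Rightarrow> complex mat" where
  "exchJ m = mat m m (\<lambda>(k,l). if k + l = m - 1 then 1 else 0)"

definition matA :: "nat \<Rightarrow> complex \<Rightarrow> complex \<Rightarrow> complex mat" where
  "matA m \<alpha> \<beta> = mat m m (\<lambda>(k,l).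
      if k = 0 \<and> l = 0 then \<alpha>
      else if k = m - 1 \<and> l = m - 1 then \<beta>
      else if k = l + 1 \<or> l = k + 1 then 1 else 0)"

definition matP :: "nat \<Rightarrow> complex \<Rightarrow> complex \<Rightarrow> nat \<Rightarrow> complex mat" where
  "matP m \<alpha> \<beta> i =
     (if i = 0 then 1\<^sub>m m
      else toepT m i + hankelH m \<alpha> i + exchJ m * hankelH m \<beta> i * exchJ m)"

definition msum :: "nat \<Rightarrow> (nat \<Rightarrow> complex mat) \<Rightarrow> nat list \<Rightarrow> complex mat" where
  "msum m f xs = foldr (\<lambda>i acc. f i + acc) xs (0\<^sub>m m m)"

definition phi :: "nat \<Rightarrow> complex" where
  "phi n = (if odd n then 0 else of_nat (n choose (n div 2)))"

end

theory Submission
  imports Defs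
begin


lemma hz: "i < s \<Longrightarrow> hcoeff \<gamma> i s = 0"
  by (simp add: hcoeff_def)

lemma H1: assumes "1 \<le> i" "2 \<le> s"
  shows "hcoeff \<gamma> i (s-1) + hcoeff \<gamma> i (s+1) = hcoeff \<gamma> (i+1) s + hcoeff \<gamma> (i-1) s"
proof -
  consider "s + 2 \<le> i" | "s + 1 = i" | "s = i" | "s = i + 1" | "s \<ge> i+2" using assms by linarith
  then show ?thesis
  proof cases
    case 1
    then obtain d where d: "i = s + 2 + d" by (metis le_iff_add)
    have a: "i - (s - 1) - 1 = Suc (Suc d)" "i - (s+1) - 1 = d" "i + 1 - s - 1 = Suc (Suc d)"
        "i - 1 - s - 1 = d" using d assms by auto
    show ?thesis using 1 assms unfolding hcoeff_def a by auto
  next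
    case 2
    have a: "i - (s - 1) - 1 = 1" "i + 1 - s - 1 = 1" using 2 assms by auto
    show ?thesis using 2 assms unfolding hcoeff_def a by auto
  next
    case 3
    have a: "i - (s - 1) - 1 = 0" "i + 1 - s - 1 = 0" using 3 assms by auto
    show ?thesis using 3 assms unfolding hcoeff_def a by auto
  next
    case 4 then show ?thesis using assms unfolding hcoeff_def by auto
  next
    case 5 then show ?thesis using assms unfolding hcoeff_def by auto
  qed
qed

lemma H0: assumes "1 \<le> i"
  shows "\<gamma> * hcoeff \<gamma> i (k+1) + hcoeff \<gamma> i (k+2) + (if k = i then \<gamma> else 0)
       = hcoeff \<gamma> (i+1) (k+1) + hcoeff \<gamma> (i-1) (k+1) + (if k + 1 = i then 1 else 0)"
proof -
  consider "k + 2 < i" | "k + 2 = i" | "k + 1 = i" | "k = i" | "k > i" by linarith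
  then show ?thesis
  proof cases
    case 1
    define d where "d = i - k - 3"
    have d: "i = k + 3 + d" using 1 by (simp add: d_def)
    have a: "i - (k+1) - 1 = Suc d" "i - (k+2) - 1 = d" "i + 1 - (k+1) - 1 = Suc (Suc d)"
        "i - 1 - (k+1) - 1 = d" using d by auto
    have b: "i \<noteq> 1" "i + 1 \<noteq> 1" "i - 1 \<noteq> 1" "k + 1 \<noteq> i" "k+2 \<noteq> i" "k \<noteq> i"  "k + 1 \<noteq> i + 1" "k+1 \<noteq> i - 1"
      "k + 1 < i" "k+2 < i" "k + 1 < i + 1" "k + 1 < i - 1" using 1 by auto
    show ?thesis unfolding hcoeff_def a using b by (simp add: mult_ac)
  next
    case 2
    have a: "i - (k+1) - 1 = 0" "i + 1 - (k+1) - 1 = 1" using 2 by auto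
    have b: "i \<noteq> 1" "i + 1 \<noteq> 1" "k + 1 \<noteq> i" "k+2 = i" "k \<noteq> i"  "k + 1 \<noteq> i + 1" "k+1 = i - 1"
      "k + 1 < i" "k + 1 < i + 1" using 2 by auto
    show ?thesis unfolding hcoeff_def a using b 2 by (cases "k = 0") (auto simp: power2_eq_square mult_ac)
  next
    case 3
    have a: "i - (k+1) - 1 = 0" "i + 1 - (k+1) - 1 = 0" using 3 by auto
    have b: "i + 1 \<noteq> 1" "k + 1 = i" "k+2 \<noteq> i" "k \<noteq> i"  "k + 1 \<noteq> i + 1" "\<not> (k+1 < i)"
      "k + 1 < i + 1" "k+2 > i" "k + 1 > i - 1" "k+1 \<noteq> i - 1" using 3 by auto
    show ?thesis unfolding hcoeff_def theta_def a using b by (cases "i = 1") (simp_all add: power2_eq_square algebra_simps)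
  next
    case 4
    have a: "i + 1 - (k+1) - 1 = 0" using 4 by auto
    have b: "i + 1 \<noteq> 1" "k + 1 \<noteq> i" "k+2 > i" "k = i"  "k + 1 = i + 1" "k+1 > i" "k + 1 > i - 1" "k+1 \<noteq> i - 1" using 4 assms by auto
    show ?thesis unfolding hcoeff_def a using b by (cases "i = 1") simp_all
  next
    case 5 then show ?thesis using assms unfolding hcoeff_def by auto
  qed
qed


definition tt :: "nat \<Rightarrow> nat \<Rightarrow> nat \<Rightarrow> complex" where
  "tt i k l = (if k = l + i then 1 else 0) + (if l = k + i then 1 else 0)"

definition pe :: "nat \<Rightarrow> complex \<Rightarrow> complex \<Rightarrow> nat \<Rightarrow> nat \<Rightarrow> nat \<Rightarrow> complex" where
  "pe m \<alpha> \<beta> i k l = tt i k l + hcoeff \<alpha> i (k+l+1) + hcoeff \<beta> i ((m-1-k)+(m-1-l)+1)"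

definition dl :: "nat \<Rightarrow> nat \<Rightarrow> complex" where
  "dl k l = (if k = l then 1 else 0)"

definition cop :: "nat \<Rightarrow> complex \<Rightarrow> complex \<Rightarrow> (nat \<Rightarrow> nat \<Rightarrow> complex) \<Rightarrow> nat \<Rightarrow> nat \<Rightarrow> complex" where
  "cop m \<alpha> \<beta> X k l = (if l = 0 then \<alpha> * X k 0 else 0) + (if l = m - 1 then \<beta> * X k (m-1) else 0)
     + (if 1 \<le> l then X k (l - 1) else 0) + (if l + 1 < m then X k (l+1) else 0)"

lemma lin2: fixes P1 P2 Q1 Q2 X Y :: complex
  assumes "P1 + X = Q1 + Y" "P2 + Y = Q2 + X" shows "P1 + P2 = Q1 + Q2"
proof -
  have "P1 = Q1 + Y - X" "P2 = Q2 + X - Y" using assms by (simp_all add: eq_diff_eq)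
  then show ?thesis by simp
qed

lemma lin3: fixes a1 a2 b1 b2 c1 c2 d1 d2 e1 e2 f1 f2 :: complex
  assumes "a1+a2 = b1+b2" "c1+c2 = d1+d2" "e1+e2 = f1+f2"
  shows "e1 + a1 + c2 + (e2 + a2 + c1) = f1 + b1 + d1 + (f2 + b2 + d2)"
proof -
  have x: "a1 = b1 + b2 - a2" "c2 = d1+d2-c1" "e1 = f1+f2-e2"
    using assms by (metis add_diff_cancel_right', metis add_diff_cancel_left', metis add_diff_cancel_right')
  show ?thesis unfolding x by (simp add: algebra_simps)
qed

lemma tt_int: "1 \<le> i \<Longrightarrow> 1 \<le> l \<Longrightarrow> tt i k (l-1) + tt i k (l+1) = tt (i+1) k l + tt (i-1) k l"
  unfolding tt_def by auto

lemma pe_shift: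
  assumes m: "2 \<le> m" and i: "1 \<le> i" "i + 2 \<le> m" and k: "k < m" and l: "l < m"
  shows "cop m \<alpha> \<beta> (pe m \<alpha> \<beta> i) k l = pe m \<alpha> \<beta> (i+1) k l + pe m \<alpha> \<beta> (i-1) k l"
proof -
  consider "l = 0" | "1 \<le> l" "l + 1 < m" | "l = m - 1" "1 \<le> l" using l m by linarith
  then show ?thesis
  proof cases
    case 1
    have c: "cop m \<alpha> \<beta> X k l = \<alpha> * X k 0 + X k 1" for X
      using 1 i unfolding cop_def by auto
    have z: "hcoeff \<beta> i ((m-1-k)+(m-1-0)+1) = 0" "hcoeff \<beta> i ((m-1-k)+(m-1-1)+1) = 0"
      "hcoeff \<beta> (i+1) ((m-1-k)+(m-1-0)+1) = 0" "hcoeff \<beta> (i-1) ((m-1-k)+(m-1-0)+1) = 0"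
      using i k by (auto intro!: hz)
    have h: "\<alpha> * hcoeff \<alpha> i (k+0+1) + hcoeff \<alpha> i (k+1+1) + (if k = i then \<alpha> else 0)
       = hcoeff \<alpha> (i+1) (k+0+1) + hcoeff \<alpha> (i-1) (k+0+1) + (if k + 1 = i then 1 else 0)"
      using H0[OF i(1), of \<alpha> k] by (simp add: numeral_2_eq_2)
    have t: "\<alpha> * tt i k 0 + tt i k 1 + (if k + 1 = i then 1 else 0) = tt (i+1) k 0 + tt (i-1) k 0 + (if k = i then \<alpha> else 0)"
      using i unfolding tt_def by auto
    show ?thesis unfolding c unfolding pe_def 1 z using lin2[OF h t] by (simp add: algebra_simps)
  next
    case 2
    have c: "cop m \<alpha> \<beta> X k l = X k (l-1) + X k (l+1)" for X
      using 2 i unfolding cop_def by auto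
    have e1: "k + (l-1) + 1 = (k+l+1) - 1" "k+(l+1)+1 = (k+l+1)+1" using 2 by auto
    have e2: "(m-1-k)+(m-1-(l-1))+1 = ((m-1-k)+(m-1-l)+1) + 1"
             "(m-1-k)+(m-1-(l+1))+1 = ((m-1-k)+(m-1-l)+1) - 1" using 2 k by auto
    have h1: "hcoeff \<alpha> i ((k+l+1)-1) + hcoeff \<alpha> i ((k+l+1)+1) = hcoeff \<alpha> (i+1) (k+l+1) + hcoeff \<alpha> (i-1) (k+l+1)"
      using H1[OF i(1), of "k+l+1"] 2 by auto
    have h2: "hcoeff \<beta> i (((m-1-k)+(m-1-l)+1)-1) + hcoeff \<beta> i (((m-1-k)+(m-1-l)+1)+1)
       = hcoeff \<beta> (i+1) ((m-1-k)+(m-1-l)+1) + hcoeff \<beta> (i-1) ((m-1-k)+(m-1-l)+1)"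
      by (rule H1[OF i(1)]) (use 2 in auto)
    show ?thesis unfolding c unfolding pe_def e1 e2 by (rule lin3[OF h1 h2 tt_int[OF i(1) 2(1), of k]])
  next
    case 3
    have c: "cop m \<alpha> \<beta> X k l = \<beta> * X k (m-1) + X k (m-2)" for X
      using 3 i unfolding cop_def by (auto simp: numeral_2_eq_2)
    define kk where "kk = m - 1 - k"
    have kk: "k = m - 1 - kk" "kk < m" using k unfolding kk_def by auto
    have z: "hcoeff \<alpha> i (k+(m-1)+1) = 0" "hcoeff \<alpha> i (k+(m-2)+1) = 0"
      "hcoeff \<alpha> (i+1) (k+(m-1)+1) = 0" "hcoeff \<alpha> (i-1) (k+(m-1)+1) = 0"
      using i k by (auto intro!: hz)
    have e: "(m-1-k)+(m-1-(m-1))+1 = kk+0+1" "(m-1-k)+(m-1-(m-2))+1 = kk+1+1" using m k unfolding kk_def by auto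
    have h: "\<beta> * hcoeff \<beta> i (kk+0+1) + hcoeff \<beta> i (kk+1+1) + (if kk = i then \<beta> else 0)
       = hcoeff \<beta> (i+1) (kk+0+1) + hcoeff \<beta> (i-1) (kk+0+1) + (if kk + 1 = i then 1 else 0)"
      using H0[OF i(1), of \<beta> kk] by (simp add: numeral_2_eq_2)
    have t: "\<beta> * tt i k (m-1) + tt i k (m-2) + (if kk + 1 = i then 1 else 0) = tt (i+1) k (m-1) + tt (i-1) k (m-1) + (if kk = i then \<beta> else 0)"
    proof -
      have m3: "3 \<le> m" using i by auto
      have kk2: "m = k + kk + 1" using k unfolding kk_def by auto
      have t1: "tt i k (m-1) = (if kk = i then 1 else 0)" unfolding tt_def kk2 using i by simp
      have t2: "tt i k (m-2) = (if i = 1 \<and> kk = 0 then 1 else 0) + (if kk = i + 1 then 1 else 0)"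
        unfolding tt_def kk2 using m3 i kk2 by auto
      have t3: "tt (i+1) k (m-1) = (if kk = i + 1 then 1 else 0)" unfolding tt_def kk2 using i by simp
      have t4: "tt (i-1) k (m-1) = (if i = 1 \<and> kk = 0 then 1 else 0) + (if kk + 1 = i then 1 else 0)"
        unfolding tt_def kk2 using i by auto
      show ?thesis unfolding t1 t2 t3 t4 by (cases "kk = i"; cases "kk + 1 = i"; cases "i = 1 \<and> kk = 0"; simp)
    qed
    show ?thesis unfolding c unfolding pe_def 3(1) z e using lin2[OF h t] by (simp add: algebra_simps)
  qed
qed

lemma h1: "hcoeff \<gamma> 1 s = (if s = 1 then \<gamma> else 0)" by (simp add: hcoeff_def)

lemma dl_shift:
  assumes m: "2 \<le> m" and k: "k < m" and l: "l < m"
  shows "cop m \<alpha> \<beta> dl k l = pe m \<alpha> \<beta> 1 k l"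
proof -
  obtain kk ll where kk: "m = k + kk + 1" and ll: "m = l + ll + 1" using k l by (metis add.commute add_Suc_right less_iff_Suc_add Suc_eq_plus1)
  have ll': "l + ll = k + kk" using kk ll by simp
  show ?thesis unfolding cop_def dl_def pe_def tt_def h1 using m ll' unfolding kk by auto
qed

lemma cop_sum: "cop m \<alpha> \<beta> (\<lambda>a b. \<Sum>i\<in>S. f i a b) k l = (\<Sum>i\<in>S. cop m \<alpha> \<beta> (f i) k l)"
  unfolding cop_def by (simp add: sum.distrib sum_distrib_left)

lemma cop_mult: "cop m \<alpha> \<beta> (\<lambda>a b. c * X a b) k l = c * cop m \<alpha> \<beta> X k l"
  unfolding cop_def by (simp add: algebra_simps)

lemma cop_cong: "l < m \<Longrightarrow> (\<And>b. b < m \<Longrightarrow> X k b = Y k b) \<Longrightarrow> cop m \<alpha> \<beta> X k l = cop m \<alpha> \<beta> Y k l"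
  unfolding cop_def by auto

definition mv :: "nat \<Rightarrow> complex \<Rightarrow> complex \<Rightarrow> int \<Rightarrow> nat \<Rightarrow> nat \<Rightarrow> complex" where
  "mv m \<alpha> \<beta> j k l = (if j = 0 then dl k l else pe m \<alpha> \<beta> (nat \<bar>j\<bar>) k l / 2)"

lemma pe0: "k < m \<Longrightarrow> l < m \<Longrightarrow> pe m \<alpha> \<beta> 0 k l = 2 * dl k l"
  unfolding pe_def tt_def dl_def hcoeff_def by auto

lemma mv_shift:
  assumes m: "2 \<le> m" and j: "nat \<bar>j\<bar> + 2 \<le> m" and k: "k < m" and l: "l < m"
  shows "cop m \<alpha> \<beta> (mv m \<alpha> \<beta> j) k l = mv m \<alpha> \<beta> (j+1) k l + mv m \<alpha> \<beta> (j-1) k l"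
proof -
  consider "j = 0" | "j > 0" | "j < 0" by linarith
  then show ?thesis
  proof cases
    case 1
    have "mv m \<alpha> \<beta> j = dl" using 1 unfolding mv_def by (auto simp: fun_eq_iff)
    then show ?thesis using dl_shift[OF m k l, of \<alpha> \<beta>] 1 unfolding mv_def by simp
  next
    case 2
    obtain i where ij: "j = int i" "1 \<le> i" using pos_int_cases[OF 2] by (metis One_nat_def Suc_leI)
    have e: "mv m \<alpha> \<beta> j = (\<lambda>a b. (1/2) * pe m \<alpha> \<beta> i a b)" using ij unfolding mv_def by (auto simp: fun_eq_iff)
    have s: "cop m \<alpha> \<beta> (pe m \<alpha> \<beta> i) k l = pe m \<alpha> \<beta> (i+1) k l + pe m \<alpha> \<beta> (i-1) k l"
      using pe_shift[OF m ij(2) _ k l] j ij by auto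
    show ?thesis unfolding e cop_mult s using ij k l pe0[OF k l, of \<alpha> \<beta>]
      unfolding mv_def by (auto simp: nat_add_distrib nat_diff_distrib algebra_simps)
  next
    case 3
    obtain i where ij: "j = - int i" "1 \<le> i" using pos_int_cases[of "-j"] 3 by (metis One_nat_def Suc_leI minus_minus neg_0_less_iff_less)
    have e: "mv m \<alpha> \<beta> j = (\<lambda>a b. (1/2) * pe m \<alpha> \<beta> i a b)" using ij unfolding mv_def by (auto simp: fun_eq_iff)
    have s: "cop m \<alpha> \<beta> (pe m \<alpha> \<beta> i) k l = pe m \<alpha> \<beta> (i+1) k l + pe m \<alpha> \<beta> (i-1) k l"
      using pe_shift[OF m ij(2) _ k l] j ij by auto
    have a1: "nat \<bar>j - 1\<bar> = i + 1" "nat \<bar>j + 1\<bar> = i - 1" using ij by auto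
    show ?thesis unfolding e cop_mult s using ij k l pe0[OF k l, of \<alpha> \<beta>]
      unfolding mv_def a1 by (auto simp: algebra_simps)
  qed
qed

lemma pascal:
  fixes f :: "int \<Rightarrow> complex"
  shows "(\<Sum>i\<le>Suc n. of_nat (Suc n choose i) * f (int (Suc n) - 2 * int i))
       = (\<Sum>i\<le>n. of_nat (n choose i) * (f (int n - 2 * int i + 1) + f (int n - 2 * int i - 1)))"
proof -
  have A: "(\<Sum>i\<le>Suc n. of_nat (Suc n choose i) * f (int (Suc n) - 2 * int i))
     = f (int n + 1) + (\<Sum>i\<le>n. of_nat (n choose i) * f (int n - 2 * int i - 1))
        + (\<Sum>i\<le>n. of_nat (n choose Suc i) * f (int n - 2 * int i - 1))"
    by (subst sum.atMost_Suc_shift) (simp add: sum.distrib algebra_simps)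
  have B: "(\<Sum>i\<le>n. of_nat (n choose i) * f (int n - 2 * int i + 1))
     = (\<Sum>i\<le>Suc n. of_nat (n choose i) * f (int n - 2 * int i + 1))" by simp
  also have "\<dots> = f (int n + 1) + (\<Sum>i\<le>n. of_nat (n choose Suc i) * f (int n - 2 * int i - 1))"
    by (subst sum.atMost_Suc_shift) (simp add: algebra_simps)
  finally show ?thesis unfolding A by (simp add: sum.distrib algebra_simps)
qed

lemma pairing:
  fixes g :: "nat \<Rightarrow> complex"
  assumes n: "1 \<le> n" and sym: "\<And>i. i \<le> n \<Longrightarrow> g (n - i) = g i"
  shows "(\<Sum>i\<le>n. g i) = (\<Sum>i<(n - 1) div 2 + 1. 2 * g i) + (if even n then g (n div 2) else 0)"
proof -
  let ?L = "{i. 2 * i < n}" and ?U = "{i. n < 2 * i \<and> i \<le> n}" and ?M = "{i. 2 * i = n}"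
  have L: "?L = {..<(n - 1) div 2 + 1}" using n by auto
  have split: "{..n} = ?L \<union> ?U \<union> ?M" by auto
  have fin1: "finite ?L" unfolding L by simp
  have fin2: "finite ?U" by (rule finite_subset[of _ "{..n}"]) auto
  have fin3: "finite ?M" by (rule finite_subset[of _ "{..n}"]) auto
  have s1: "(\<Sum>i\<le>n. g i) = sum g ?L + sum g ?U + sum g ?M"
    unfolding split using fin1 fin2 fin3 by (subst sum.union_disjoint, auto)+
  have s2: "sum g ?U = sum g ?L"
    by (rule sum.reindex_bij_witness[of _ "\<lambda>i. n - i" "\<lambda>i. n - i"]) (auto simp: sym)
  have s3: "sum g ?M = (if even n then g (n div 2) else 0)"
  proof (cases "even n")
    case True
    then have "?M = {n div 2}" by auto
    then show ?thesis using True by simp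
  next
    case False
    then have "?M = {}" by auto
    then show ?thesis using False by simp
  qed
  have "(\<Sum>i<(n - 1) div 2 + 1. 2 * g i) = 2 * sum g ?L" unfolding L by (simp add: sum_distrib_left)
  then show ?thesis unfolding s1 s2 s3 by (simp add: algebra_simps)
qed
lemma sum_delta_mult:
  fixes f :: "nat \<Rightarrow> complex"
  shows "(\<Sum>j\<in>{0..<m}. f j * (if j = c then e else 0)) = (if c < m then f c * e else 0)"
proof -
  have "(\<Sum>j\<in>{0..<m}. f j * (if j = c then e else 0)) = (\<Sum>j\<in>{0..<m}. if j = c then f c * e else 0)"
    by (rule sum.cong) auto
  then show ?thesis by simp
qed

lemma matA_carrier[simp]: "matA m \<alpha> \<beta> \<in> carrier_mat m m" by (simp add: matA_def)

lemma mult_A: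
  assumes X: "X \<in> carrier_mat m m" and m: "2 \<le> m" and k: "k < m" and l: "l < m"
  shows "(X * matA m \<alpha> \<beta>) $$ (k,l) = cop m \<alpha> \<beta> (\<lambda>a b. X $$ (a,b)) k l"
proof -
  have e: "matA m \<alpha> \<beta> $$ (j,l) = (if j = 0 then (if l=0 then \<alpha> else 0) else 0) + (if j = m-1 then (if l = m-1 then \<beta> else 0) else 0)
     + (if j = l - 1 then (if 1 \<le> l then 1 else 0) else 0) + (if j = l+1 then 1 else 0)" if j: "j < m" for j
    unfolding matA_def using j l m by auto
  have "(X * matA m \<alpha> \<beta>) $$ (k,l) = (\<Sum>j\<in>{0..<m}. X $$ (k,j) * matA m \<alpha> \<beta> $$ (j,l))"
    using X k l by (auto simp: scalar_prod_def matA_def intro!: sum.cong)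
  also have "\<dots> = (\<Sum>j\<in>{0..<m}. X $$ (k,j) * (if j = 0 then (if l=0 then \<alpha> else 0) else 0)
     + X $$ (k,j) * (if j = m-1 then (if l = m-1 then \<beta> else 0) else 0)
     + X $$ (k,j) * (if j = l - 1 then (if 1 \<le> l then 1 else 0) else 0) + X $$ (k,j) * (if j = l+1 then 1 else 0))"
    by (rule sum.cong) (simp_all add: e distrib_left)
  also have "\<dots> = cop m \<alpha> \<beta> (\<lambda>a b. X $$ (a,b)) k l"
    unfolding sum.distrib sum_delta_mult using m l by (auto simp: cop_def)
  finally show ?thesis .
qed

lemma exchJ_carrier[simp]: "exchJ m \<in> carrier_mat m m" by (simp add: exchJ_def)
lemma hankelH_carrier[simp]: "hankelH m \<gamma> i \<in> carrier_mat m m" by (simp add: hankelH_def)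
lemma toepT_carrier[simp]: "toepT m i \<in> carrier_mat m m" by (simp add: toepT_def)

lemma dims[simp]: "dim_row (matA m \<alpha> \<beta>) = m" "dim_col (matA m \<alpha> \<beta>) = m"
  "dim_row (exchJ m) = m" "dim_col (exchJ m) = m" "dim_row (hankelH m \<gamma> i) = m" "dim_col (hankelH m \<gamma> i) = m"
  "dim_row (toepT m i) = m" "dim_col (toepT m i) = m"
  by (simp_all add: matA_def exchJ_def hankelH_def toepT_def)

lemma J_left:
  assumes H: "H \<in> carrier_mat m n" and k: "k < m" and b: "b < n"
  shows "(exchJ m * H) $$ (k,b) = H $$ (m-1-k, b)"
proof -
  have "(exchJ m * H) $$ (k,b) = (\<Sum>j\<in>{0..<m}. H $$ (j,b) * (if j = m-1-k then 1 else 0))"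
    using H k b by (auto simp: scalar_prod_def exchJ_def intro!: sum.cong)
  then show ?thesis using k by (simp add: sum_delta_mult)
qed

lemma J_right:
  assumes Y: "Y \<in> carrier_mat n m" and k: "k < n" and l: "l < m"
  shows "(Y * exchJ m) $$ (k,l) = Y $$ (k, m-1-l)"
proof -
  have "(Y * exchJ m) $$ (k,l) = (\<Sum>j\<in>{0..<m}. Y $$ (k,j) * (if j = m-1-l then 1 else 0))"
    using Y k l by (auto simp: scalar_prod_def exchJ_def intro!: sum.cong)
  then show ?thesis using l by (simp add: sum_delta_mult)
qed

lemma matP_carrier[simp]: "matP m \<alpha> \<beta> i \<in> carrier_mat m m"
  unfolding matP_def by (auto intro!: add_carrier_mat mult_carrier_mat)

lemma matP_idx:
  assumes i: "1 \<le> i" and k: "k < m" and l: "l < m"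
  shows "matP m \<alpha> \<beta> i $$ (k,l) = pe m \<alpha> \<beta> i k l"
proof -
  have c1: "exchJ m * hankelH m \<beta> i \<in> carrier_mat m m" by (auto intro!: mult_carrier_mat)
  have jhj: "(exchJ m * hankelH m \<beta> i * exchJ m) $$ (k,l) = hcoeff \<beta> i ((m-1-k)+(m-1-l)+1)"
  proof -
    have "(exchJ m * hankelH m \<beta> i * exchJ m) $$ (k,l) = (exchJ m * hankelH m \<beta> i) $$ (k, m-1-l)"
      by (rule J_right[OF c1 k l])
    also have "\<dots> = hankelH m \<beta> i $$ (m-1-k, m-1-l)"
      by (rule J_left) (use k l in auto)
    also have "\<dots> = hcoeff \<beta> i ((m-1-k)+(m-1-l)+1)" using k l by (simp add: hankelH_def add.commute)
    finally show ?thesis .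
  qed
  have c: "exchJ m * hankelH m \<beta> i * exchJ m \<in> carrier_mat m m" by (auto intro!: mult_carrier_mat)
  show ?thesis using i k l c jhj unfolding matP_def pe_def
    by (simp add: toepT_def hankelH_def tt_def)
qed

lemma msum_carrier: "(\<And>i. i \<in> set xs \<Longrightarrow> f i \<in> carrier_mat m m) \<Longrightarrow> msum m f xs \<in> carrier_mat m m"
  unfolding msum_def by (induction xs) auto

lemma msum_idx: "(\<And>i. i \<in> set xs \<Longrightarrow> f i \<in> carrier_mat m m) \<Longrightarrow> k < m \<Longrightarrow> l < m
   \<Longrightarrow> msum m f xs $$ (k,l) = (\<Sum>i\<leftarrow>xs. f i $$ (k,l))"
proof (induction xs)
  case Nil then show ?case by (simp add: msum_def)
next
  case (Cons a xs)
  have "msum m f xs \<in> carrier_mat m m" using Cons.prems by (intro msum_carrier) auto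
  then show ?case using Cons by (simp add: msum_def)
qed


lemma mv_neg: "mv m \<alpha> \<beta> (- j) = mv m \<alpha> \<beta> j"
  unfolding mv_def by (auto simp: fun_eq_iff)

lemma pow_entries:
  assumes m: "2 \<le> m"
  shows "n \<le> m - 1 \<Longrightarrow> k < m \<Longrightarrow> l < m \<Longrightarrow> (matA m \<alpha> \<beta> ^\<^sub>m n) $$ (k,l)
     = (\<Sum>i\<le>n. of_nat (n choose i) * mv m \<alpha> \<beta> (int n - 2 * int i) k l)"
proof (induction n arbitrary: k l)
  case 0
  then show ?case by (simp add: mv_def dl_def)
next
  case (Suc n)
  have C: "matA m \<alpha> \<beta> ^\<^sub>m n \<in> carrier_mat m m" by simp
  have "(matA m \<alpha> \<beta> ^\<^sub>m Suc n) $$ (k,l) = cop m \<alpha> \<beta> (\<lambda>a b. (matA m \<alpha> \<beta> ^\<^sub>m n) $$ (a,b)) k l"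
    using mult_A[OF C m Suc.prems(2,3)] by simp
  also have "\<dots> = cop m \<alpha> \<beta> (\<lambda>a b. \<Sum>i\<le>n. of_nat (n choose i) * mv m \<alpha> \<beta> (int n - 2 * int i) a b) k l"
    by (rule cop_cong) (use Suc in auto)
  also have "\<dots> = (\<Sum>i\<le>n. of_nat (n choose i) * cop m \<alpha> \<beta> (mv m \<alpha> \<beta> (int n - 2 * int i)) k l)"
    unfolding cop_sum cop_mult by simp
  also have "\<dots> = (\<Sum>i\<le>n. of_nat (n choose i) * (mv m \<alpha> \<beta> (int n - 2 * int i + 1) k l + mv m \<alpha> \<beta> (int n - 2 * int i - 1) k l))"
  proof (rule sum.cong)
    fix i assume "i \<in> {..n}"
    then have "nat \<bar>int n - 2 * int i\<bar> + 2 \<le> m" using Suc.prems by auto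
    then show "of_nat (n choose i) * cop m \<alpha> \<beta> (mv m \<alpha> \<beta> (int n - 2 * int i)) k l =
      of_nat (n choose i) * (mv m \<alpha> \<beta> (int n - 2 * int i + 1) k l + mv m \<alpha> \<beta> (int n - 2 * int i - 1) k l)"
      using mv_shift[OF m _ Suc.prems(2,3)] by simp
  qed simp
  also have "\<dots> = (\<Sum>i\<le>Suc n. of_nat (Suc n choose i) * mv m \<alpha> \<beta> (int (Suc n) - 2 * int i) k l)"
    by (rule pascal[symmetric])
  finally show ?case .
qed

theorem mainTheorem10:
  fixes m n :: nat and \<alpha> \<beta> :: complex
  assumes "m \<ge> 2" and "1 \<le> n" and "n \<le> m - 1"
  shows "matA m \<alpha> \<beta> ^\<^sub>m n =
           msum m (\<lambda>i. of_nat (n choose i) \<cdot>\<^sub>m matP m \<alpha> \<beta> (n - 2 * i)) [0..<(n - 1) div 2 + 1]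
           + phi n \<cdot>\<^sub>m 1\<^sub>m m"
proof -
  let ?N = "(n - 1) div 2 + 1"
  have Cs: "msum m (\<lambda>i. of_nat (n choose i) \<cdot>\<^sub>m matP m \<alpha> \<beta> (n - 2 * i)) [0..<?N] \<in> carrier_mat m m"
    by (rule msum_carrier) simp
  show ?thesis
  proof (rule eq_matI)
    show "dim_row (matA m \<alpha> \<beta> ^\<^sub>m n) = dim_row (msum m (\<lambda>i. of_nat (n choose i) \<cdot>\<^sub>m matP m \<alpha> \<beta> (n - 2 * i)) [0..<?N] + phi n \<cdot>\<^sub>m 1\<^sub>m m)"
      by simp
    show "dim_col (matA m \<alpha> \<beta> ^\<^sub>m n) = dim_col (msum m (\<lambda>i. of_nat (n choose i) \<cdot>\<^sub>m matP m \<alpha> \<beta> (n - 2 * i)) [0..<?N] + phi n \<cdot>\<^sub>m 1\<^sub>m m)"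
      by simp
    fix k l
    assume "k < dim_row (msum m (\<lambda>i. of_nat (n choose i) \<cdot>\<^sub>m matP m \<alpha> \<beta> (n - 2 * i)) [0..<?N] + phi n \<cdot>\<^sub>m 1\<^sub>m m)"
      "l < dim_col (msum m (\<lambda>i. of_nat (n choose i) \<cdot>\<^sub>m matP m \<alpha> \<beta> (n - 2 * i)) [0..<?N] + phi n \<cdot>\<^sub>m 1\<^sub>m m)"
    then have k: "k < m" and l: "l < m" by auto
    let ?g = "\<lambda>i. of_nat (n choose i) * mv m \<alpha> \<beta> (int n - 2 * int i) k l"
    have "(matA m \<alpha> \<beta> ^\<^sub>m n) $$ (k,l) = (\<Sum>i\<le>n. ?g i)"
      using pow_entries[OF assms(1) assms(3) k l] .
    also have "\<dots> = (\<Sum>i<?N. 2 * ?g i) + (if even n then ?g (n div 2) else 0)"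
    proof (rule pairing[OF assms(2)])
      fix i assume i: "i \<le> n"
      have "int n - 2 * int (n - i) = - (int n - 2 * int i)" using i by simp
      then have mvf: "mv m \<alpha> \<beta> (int n - 2 * int (n - i)) k l = mv m \<alpha> \<beta> (int n - 2 * int i) k l"
        by (simp only: mv_neg)
      have b: "n choose (n - i) = n choose i" using i by (rule binomial_symmetric[symmetric])
      show "?g (n - i) = ?g i" unfolding b mvf ..
    qed
    also have "\<dots> = (\<Sum>i<?N. of_nat (n choose i) * pe m \<alpha> \<beta> (n - 2 * i) k l) + phi n * (if k = l then 1 else 0)"
    proof -
      have ge: "2 * ?g i = of_nat (n choose i) * pe m \<alpha> \<beta> (n - 2 * i) k l" if "i < ?N" for i
      proof -
        have "2 * i < n" using that assms(2) by auto
        then have "int n - 2 * int i \<noteq> 0" "nat \<bar>int n - 2 * int i\<bar> = n - 2 * i" "nat (int n - 2 * int i) = n - 2 * i" by auto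
        then show ?thesis unfolding mv_def by simp
      qed
      have ev: "(if even n then ?g (n div 2) else 0) = phi n * (if k = l then 1 else 0)"
        unfolding phi_def mv_def dl_def by auto
      have su: "(\<Sum>i<?N. 2 * ?g i) = (\<Sum>i<?N. of_nat (n choose i) * pe m \<alpha> \<beta> (n - 2 * i) k l)"
      proof (rule sum.cong)
        fix i assume "i \<in> {..<?N}"
        then show "2 * ?g i = of_nat (n choose i) * pe m \<alpha> \<beta> (n - 2 * i) k l" by (intro ge) simp
      qed simp
      show ?thesis unfolding su ev ..
    qed
    also have "\<dots> = (msum m (\<lambda>i. of_nat (n choose i) \<cdot>\<^sub>m matP m \<alpha> \<beta> (n - 2 * i)) [0..<?N] + phi n \<cdot>\<^sub>m 1\<^sub>m m) $$ (k,l)"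
    proof -
      have "msum m (\<lambda>i. of_nat (n choose i) \<cdot>\<^sub>m matP m \<alpha> \<beta> (n - 2 * i)) [0..<?N] $$ (k,l)
          = (\<Sum>i\<leftarrow>[0..<?N]. (of_nat (n choose i) \<cdot>\<^sub>m matP m \<alpha> \<beta> (n - 2 * i)) $$ (k,l))"
        by (rule msum_idx) (use k l in simp_all)
      also have "\<dots> = (\<Sum>i\<in>{0..<?N}. (of_nat (n choose i) \<cdot>\<^sub>m matP m \<alpha> \<beta> (n - 2 * i)) $$ (k,l))"
        by (simp add: sum_set_upt_conv_sum_list_nat[symmetric])
      also have "\<dots> = (\<Sum>i<?N. of_nat (n choose i) * pe m \<alpha> \<beta> (n - 2 * i) k l)"
        unfolding atLeast0LessThan
      proof (rule sum.cong)
        fix i assume "i \<in> {..<?N}"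
        then have "1 \<le> n - 2 * i" using assms(2) by auto
        then show "(of_nat (n choose i) \<cdot>\<^sub>m matP m \<alpha> \<beta> (n - 2 * i)) $$ (k,l) = of_nat (n choose i) * pe m \<alpha> \<beta> (n - 2 * i) k l"
        proof -
          have c: "matP m \<alpha> \<beta> (n - 2 * i) \<in> carrier_mat m m" by simp
          have "(of_nat (n choose i) \<cdot>\<^sub>m matP m \<alpha> \<beta> (n - 2 * i)) $$ (k,l) = of_nat (n choose i) * matP m \<alpha> \<beta> (n - 2 * i) $$ (k,l)"
            by (rule index_smult_mat(1)) (use k l carrier_matD[OF c] in simp_all)
          also have "\<dots> = of_nat (n choose i) * pe m \<alpha> \<beta> (n - 2 * i) k l"
            by (simp only: matP_idx[OF \<open>1 \<le> n - 2 * i\<close> k l])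
          finally show ?thesis .
        qed
      qed simp
      finally show ?thesis using Cs k l by simp
    qed
    finally show "(matA m \<alpha> \<beta> ^\<^sub>m n) $$ (k,l) = (msum m (\<lambda>i. of_nat (n choose i) \<cdot>\<^sub>m matP m \<alpha> \<beta> (n - 2 * i)) [0..<?N] + phi n \<cdot>\<^sub>m 1\<^sub>m m) $$ (k,l)" .
  qed
qed

end
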